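(* Let $X$ be a metric space. Then no asymptotic cone of $X$ contains an isometric copy of the Riemannian circle of unit length if and only if $X$ does not approximate $n$-gons.
   Context: $S_n^0$ is the vertex set of the cycle graph $S_n$ of length $n$ (a Riemannian circle of length $n$ with $n$ equally spaced vertices) with the induced metric, and $\lambda S_n^0$ is it with the metric scaled by $\lambda>0$. $X$ approximates $n$-gons if for every $K>1$ and every $n\in\mathbb N$ there exist $K$-bilipschitz embeddings $\lambda S_n^0\to X$ for arbitrarily large $\lambda>0$. Asymptotic cone: for a nonprincipal ultrafilter $\mathscr U$ on $\mathbb N$, basepoints $b^{(m)}\in X$ and scalars $s^{(m)}>0$ with $s^{(m)}\to\infty$, take sequences $(x_m)$ with $d(x_m,b^{(m)})/s^{(m)}$ bounded, pseudometric $\lim_{\mathscr U}d(x_m,x'_m)/s^{(m)}$, and pass to the metric quotient. *)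

theory Defs
  imports "HOL-Analysis.Analysis"
begin

text \<open>Riemannian circle of length L, points parametrised by [0,L), intrinsic distance.\<close>
definition circle_dist :: "real \<Rightarrow> real \<Rightarrow> real \<Rightarrow> real" where
  "circle_dist L t t' = min \<bar>t - t'\<bar> (L - \<bar>t - t'\<bar>)"

text \<open>Vertex set S_n^0 = {0,...,n-1} of the cycle of length n (induced metric), scaled by lam.\<close>
definition ngon_dist :: "real \<Rightarrow> nat \<Rightarrow> nat \<Rightarrow> nat \<Rightarrow> real" where
  "ngon_dist lam n i j = lam * circle_dist (real n) (real i) (real j)"

definition bilip_ngon :: "'a::metric_space set \<Rightarrow> real \<Rightarrow> real \<Rightarrow> nat \<Rightarrow> (nat \<Rightarrow> 'a) \<Rightarrow> bool" where
  "bilip_ngon X K lam n f \<longleftrightarrow> (\<forall>i<n. f i \<in> X) \<and>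
     (\<forall>i<n. \<forall>j<n. ngon_dist lam n i j / K \<le> dist (f i) (f j)
                 \<and> dist (f i) (f j) \<le> K * ngon_dist lam n i j)"

definition approximates_ngons :: "'a::metric_space set \<Rightarrow> bool" where
  "approximates_ngons X \<longleftrightarrow> (\<forall>K>1. \<forall>n::nat. \<forall>M::real. \<exists>lam>M.
      \<exists>f. bilip_ngon X K lam n f)"

definition nonprincipal_ultrafilter :: "nat filter \<Rightarrow> bool" where
  "nonprincipal_ultrafilter U \<longleftrightarrow> U \<noteq> bot
     \<and> (\<forall>P. eventually P U \<or> eventually (\<lambda>m. \<not> P m) U)
     \<and> (\<forall>n. eventually (\<lambda>m. m \<noteq> n) U)"

definition ulim :: "nat filter \<Rightarrow> (nat \<Rightarrow> real) \<Rightarrow> real" where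
  "ulim U f = (THE L. (f \<longlongrightarrow> L) U)"

definition cone_seqs :: "'a::metric_space set \<Rightarrow> (nat \<Rightarrow> 'a) \<Rightarrow> (nat \<Rightarrow> real) \<Rightarrow> (nat \<Rightarrow> 'a) set" where
  "cone_seqs X b s = {x. (\<forall>m. x m \<in> X) \<and> (\<exists>C. \<forall>m. dist (x m) (b m) / s m \<le> C)}"

definition cone_pdist :: "nat filter \<Rightarrow> (nat \<Rightarrow> real) \<Rightarrow> (nat \<Rightarrow> 'a::metric_space) \<Rightarrow> (nat \<Rightarrow> 'a) \<Rightarrow> real" where
  "cone_pdist U s x y = ulim U (\<lambda>m. dist (x m) (y m) / s m)"

definition cone_points :: "'a::metric_space set \<Rightarrow> nat filter \<Rightarrow> (nat \<Rightarrow> 'a) \<Rightarrow> (nat \<Rightarrow> real) \<Rightarrow> (nat \<Rightarrow> 'a) set set" where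
  "cone_points X U b s = cone_seqs X b s //
     {(x, y). x \<in> cone_seqs X b s \<and> y \<in> cone_seqs X b s \<and> cone_pdist U s x y = 0}"

definition cone_dist :: "nat filter \<Rightarrow> (nat \<Rightarrow> real) \<Rightarrow> (nat \<Rightarrow> 'a::metric_space) set \<Rightarrow> (nat \<Rightarrow> 'a) set \<Rightarrow> real" where
  "cone_dist U s P Q = cone_pdist U s (SOME x. x \<in> P) (SOME y. y \<in> Q)"

definition cone_has_unit_circle :: "'a::metric_space set \<Rightarrow> nat filter \<Rightarrow> (nat \<Rightarrow> 'a) \<Rightarrow> (nat \<Rightarrow> real) \<Rightarrow> bool" where
  "cone_has_unit_circle X U b s \<longleftrightarrow> (\<exists>f. (\<forall>t\<in>{0..<1}. f t \<in> cone_points X U b s) \<and>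
      (\<forall>t\<in>{0..<1}. \<forall>t'\<in>{0..<1}. cone_dist U s (f t) (f t') = circle_dist 1 t t'))"

end

theory Submission
  imports Defs
begin

lemma ultra_ex: "\<exists>U. nonprincipal_ultrafilter U"
proof -
  let ?F = "sequentially :: nat filter"
  let ?R = "{(b, a). a \<noteq> bot \<and> a \<le> b \<and> b \<le> ?F}"
  have bot_notin_R: "c \<in> Chains ?R \<Longrightarrow> bot \<notin> c" for c
    by (auto simp: Chains_def)
  have [simp]: "Field ?R = {G. G \<noteq> bot \<and> G \<le> ?F}"
    by (auto simp: Field_def bot_unique)
  have "\<exists>m\<in>Field ?R. \<forall>a\<in>Field ?R. (m, a) \<in> ?R \<longrightarrow> a = m"
  proof (rule Zorns_po_lemma)
    show "Partial_order ?R"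
      by (auto simp: partial_order_on_def preorder_on_def
          antisym_def refl_on_def trans_def Field_def bot_unique)
    show "\<exists>u\<in>Field ?R. \<forall>a\<in>C. (a, u) \<in> ?R" if C: "C \<in> Chains ?R" for C
    proof (simp, intro exI conjI ballI)
      have Inf_C: "Inf C \<noteq> bot" "Inf C \<le> ?F" if "C \<noteq> {}"
      proof -
        from C that have "Inf C = bot \<longleftrightarrow> (\<exists>x\<in>C. x = bot)"
          unfolding trivial_limit_def by (intro eventually_Inf_base) (auto simp: Chains_def)
        with C show "Inf C \<noteq> bot"
          by (simp add: bot_notin_R)
        from that obtain x where "x \<in> C" by auto
        with C show "Inf C \<le> ?F"
          by (auto intro!: Inf_lower2[of x] simp: Chains_def)
      qed
      then have [simp]: "inf ?F (Inf C) = (if C = {} then ?F else Inf C)"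
        using C by (auto simp add: inf_absorb2)
      from C show "inf ?F (Inf C) \<noteq> bot"
        by (simp add: Inf_C)
      from C show "inf ?F (Inf C) \<le> ?F"
        by (simp add: Chains_def Inf_C)
      with C show "inf ?F (Inf C) \<le> x" "x \<le> ?F" if "x \<in> C" for x
        using that by (auto intro: Inf_lower simp: Chains_def)
    qed
  qed
  then obtain U where U0: "U \<in> Field ?R" and max0: "\<forall>a\<in>Field ?R. (U, a) \<in> ?R \<longrightarrow> a = U"
    by blast
  have U: "U \<noteq> bot" "U \<le> ?F" using U0 by simp_all
  have max: "G = U" if "G \<noteq> bot" "G \<le> U" for G
  proof -
    have "G \<in> Field ?R" using that U(2) by (simp add: order_trans[of G U])
    moreover have "(U, G) \<in> ?R" using that U(2) by simp
    ultimately show ?thesis using max0 by blast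
  qed
  have ultra: "eventually P U \<or> eventually (\<lambda>m. \<not> P m) U" for P
  proof (rule disjCI)
    assume "\<not> eventually (\<lambda>m. \<not> P m) U"
    then have "inf U (principal {x. P x}) \<noteq> bot"
      by (simp add: trivial_limit_def eventually_inf_principal)
    then have e: "inf U (principal {x. P x}) = U"
      by (rule max) simp
    have "eventually P (inf U (principal {x. P x}))"
      by (simp add: eventually_inf_principal)
    then show "eventually P U" unfolding e .
  qed
  have "eventually (\<lambda>m. m \<noteq> n) U" for n
  proof -
    have "eventually (\<lambda>m. m \<noteq> n) ?F"
      by (rule eventually_sequentiallyI[of "Suc n"]) auto
    then show ?thesis by (rule filter_leD[OF U(2)])
  qed
  then show ?thesis using U(1) ultra unfolding nonprincipal_ultrafilter_def by blast
qed


lemma np_props: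
  assumes "nonprincipal_ultrafilter U"
  shows "U \<noteq> bot" "eventually P U \<or> eventually (\<lambda>m. \<not> P m) U" "U \<le> sequentially"
proof -
  show "U \<noteq> bot" "eventually P U \<or> eventually (\<lambda>m. \<not> P m) U"
    using assms unfolding nonprincipal_ultrafilter_def by blast+
  show "U \<le> sequentially"
  proof (rule filter_leI)
    fix P :: "nat \<Rightarrow> bool" assume "eventually P sequentially"
    then obtain N where N: "\<And>n. n \<ge> N \<Longrightarrow> P n" by (auto simp: eventually_sequentially)
    have "eventually (\<lambda>m. \<forall>n\<in>{..<N}. m \<noteq> n) U"
      using assms unfolding nonprincipal_ultrafilter_def
      by (intro eventually_ball_finite) auto
    then show "eventually P U"
      by (rule eventually_mono) (metis N lessThan_iff not_le)
  qed
qed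

lemma ultra_conv:
  fixes f :: "nat \<Rightarrow> real"
  assumes U: "nonprincipal_ultrafilter U" and ab: "\<And>m. f m \<in> {a..b}"
  shows "(f \<longlongrightarrow> ulim U f) U"
proof -
  have bot: "U \<noteq> bot" and ultra: "\<And>P. eventually P U \<or> eventually (\<lambda>m. \<not> P m) U"
    using np_props[OF U] by auto
  let ?F = "filtermap f U"
  have "?F \<noteq> bot" using bot by (simp add: filtermap_bot_iff)
  moreover have "eventually (\<lambda>x. x \<in> {a..b}) ?F"
    using ab by (simp add: eventually_filtermap)
  ultimately obtain L where "L \<in> {a..b}" and L: "inf (nhds L) ?F \<noteq> bot"
    using compact_Icc[of a b] unfolding compact_filter by blast
  have conv: "(f \<longlongrightarrow> L) U"
    unfolding tendsto_def
  proof (intro allI impI)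
    fix S :: "real set" assume S: "open S" "L \<in> S"
    show "eventually (\<lambda>m. f m \<in> S) U"
    proof (rule ccontr)
      assume "\<not> eventually (\<lambda>m. f m \<in> S) U"
      then have "eventually (\<lambda>m. f m \<notin> S) U" using ultra[of "\<lambda>m. f m \<in> S"] by blast
      then have "eventually (\<lambda>x. x \<notin> S) ?F" by (simp add: eventually_filtermap)
      moreover have "eventually (\<lambda>x. x \<in> S) (nhds L)" using S by (rule eventually_nhds_in_open)
      ultimately have "eventually (\<lambda>x. False) (inf (nhds L) ?F)"
        unfolding eventually_inf by blast
      then show False using L by (simp add: trivial_limit_def)
    qed
  qed
  have "ulim U f = L" unfolding ulim_def
    using conv tendsto_unique[OF bot] by blast
  then show ?thesis using conv by simp
qed

lemma ulim_eq:
  assumes U: "nonprincipal_ultrafilter U" and "(f \<longlongrightarrow> L) U"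
  shows "ulim U f = L"
  unfolding ulim_def using assms tendsto_unique[OF np_props(1)[OF U]] by blast

lemma pdist_conv:
  assumes U: "nonprincipal_ultrafilter U" and s: "\<forall>m. s m > 0"
    and x: "x \<in> cone_seqs X b s" and y: "y \<in> cone_seqs X b s"
  shows "((\<lambda>m. dist (x m) (y m) / s m) \<longlongrightarrow> cone_pdist U s x y) U"
proof -
  obtain C1 where C1: "\<And>m. dist (x m) (b m) / s m \<le> C1" using x unfolding cone_seqs_def by blast
  obtain C2 where C2: "\<And>m. dist (y m) (b m) / s m \<le> C2" using y unfolding cone_seqs_def by blast
  have "dist (x m) (y m) / s m \<in> {0..C1+C2}" for m
  proof -
    have "dist (x m) (y m) / s m \<le> (dist (x m) (b m) + dist (y m) (b m)) / s m"
      using s by (intro divide_right_mono) (auto simp: less_imp_le intro: dist_triangle2)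
    also have "\<dots> = dist (x m) (b m) / s m + dist (y m) (b m) / s m" by (simp add: add_divide_distrib)
    finally show ?thesis using C1[of m] C2[of m] s[rule_format, of m] by auto
  qed
  then show ?thesis unfolding cone_pdist_def by (rule ultra_conv[OF U])
qed


lemma cd_scale:
  assumes "L > 0"
  shows "circle_dist L a b = L * circle_dist 1 (a / L) (b / L)"
proof -
  have e: "\<bar>a / L - b / L\<bar> = \<bar>a - b\<bar> / L" using assms
    by (simp add: diff_divide_distrib[symmetric])
  have "L * min (\<bar>a - b\<bar> / L) (1 - \<bar>a - b\<bar> / L) = min (L * (\<bar>a - b\<bar> / L)) (L * (1 - \<bar>a - b\<bar> / L))"
    using assms by (simp add: min_mult_distrib_left)
  also have "\<dots> = min \<bar>a - b\<bar> (L - \<bar>a - b\<bar>)" using assms by (simp add: algebra_simps)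
  finally show ?thesis unfolding circle_dist_def e by simp
qed

lemma cd_lip: "\<bar>circle_dist 1 a b - circle_dist 1 a' b'\<bar> \<le> \<bar>a - a'\<bar> + \<bar>b - b'\<bar>"
  unfolding circle_dist_def by (simp add: min_def abs_if split: if_splits) linarith?

lemma cd_pos: "t \<in> {0..<1} \<Longrightarrow> t' \<in> {0..<1} \<Longrightarrow> t \<noteq> t' \<Longrightarrow> circle_dist 1 t t' > 0"
  unfolding circle_dist_def by auto

lemma cd_le: "circle_dist L a b \<le> \<bar>a - b\<bar>"
  unfolding circle_dist_def by simp

lemma cd_same: "circle_dist L a a = min 0 L"
  unfolding circle_dist_def by simp

definition crel where
  "crel X U b s = {(x, y). x \<in> cone_seqs X b s \<and> y \<in> cone_seqs X b s \<and> cone_pdist U s x y = 0}"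

lemma pdist_self: "nonprincipal_ultrafilter U \<Longrightarrow> cone_pdist U s x x = 0"
  unfolding cone_pdist_def by (rule ulim_eq) auto

lemma class_in:
  assumes U: "nonprincipal_ultrafilter U" and x: "x \<in> cone_seqs X b s"
  shows "crel X U b s `` {x} \<in> cone_points X U b s" "x \<in> crel X U b s `` {x}"
proof -
  have cp: "cone_points X U b s = cone_seqs X b s // crel X U b s"
    unfolding cone_points_def crel_def ..
  show "crel X U b s `` {x} \<in> cone_points X U b s" unfolding cp using x by (rule quotientI)
  show "x \<in> crel X U b s `` {x}" using x pdist_self[OF U] by (auto simp: crel_def)
qed

lemma rep:
  assumes U: "nonprincipal_ultrafilter U" and P: "P \<in> cone_points X U b s"
  shows "(SOME x. x \<in> P) \<in> P" "P \<subseteq> cone_seqs X b s"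
proof -
  from P obtain x0 where x0: "x0 \<in> cone_seqs X b s" "P = crel X U b s `` {x0}"
    unfolding cone_points_def crel_def[symmetric] by (auto elim: quotientE)
  then have "x0 \<in> P" using class_in[OF U] by auto
  then show "(SOME x. x \<in> P) \<in> P" by (rule someI[of "\<lambda>x. x \<in> P"])
  show "P \<subseteq> cone_seqs X b s" using x0 by (auto simp: crel_def)
qed

lemma rep_class:
  assumes U: "nonprincipal_ultrafilter U" and x: "x \<in> cone_seqs X b s"
  shows "(SOME y. y \<in> crel X U b s `` {x}) \<in> cone_seqs X b s"
    "cone_pdist U s x (SOME y. y \<in> crel X U b s `` {x}) = 0"
proof -
  have "(SOME y. y \<in> crel X U b s `` {x}) \<in> crel X U b s `` {x}"
    using class_in(2)[OF U x] by (rule someI[of "\<lambda>y. y \<in> crel X U b s `` {x}"])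
  then show "(SOME y. y \<in> crel X U b s `` {x}) \<in> cone_seqs X b s"
    "cone_pdist U s x (SOME y. y \<in> crel X U b s `` {x}) = 0"
    by (auto simp: crel_def)
qed


lemma circle_approx:
  assumes U: "nonprincipal_ultrafilter U" and s: "\<forall>m. s m > 0"
    and sl: "filterlim s at_top sequentially" and C: "cone_has_unit_circle X U b s"
  shows "approximates_ngons X"
  unfolding approximates_ngons_def
proof (intro allI impI)
  fix K :: real and n :: nat and M :: real
  assume K: "K > 1"
  show "\<exists>lam>M. \<exists>f. bilip_ngon X K lam n f"
  proof (cases "n = 0")
    case True
    then show ?thesis by (intro exI[of _ "M + 1"]) (auto simp: bilip_ngon_def)
  next
    case False
    then have n: "real n > 0" by simp
    obtain F where F: "\<And>t. t \<in> {0..<1} \<Longrightarrow> F t \<in> cone_points X U b s"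
      and Fd: "\<And>t t'. t \<in> {0..<1} \<Longrightarrow> t' \<in> {0..<1} \<Longrightarrow> cone_dist U s (F t) (F t') = circle_dist 1 t t'"
      using C unfolding cone_has_unit_circle_def by blast
    define t where "t i = real i / real n" for i :: nat
    define x where "x i = (SOME y. y \<in> F (t i))" for i
    define c where "c i j = circle_dist 1 (t i) (t j)" for i j
    have t01: "t i \<in> {0..<1}" if "i < n" for i using that n by (auto simp: t_def)
    have xc: "x i \<in> cone_seqs X b s" if "i < n" for i
      using rep[OF U F[OF t01[OF that]]] unfolding x_def by blast
    have conv: "((\<lambda>m. dist (x i m) (x j m) / s m) \<longlongrightarrow> c i j) U" if "i < n" "j < n" for i j
    proof -
      have "cone_pdist U s (x i) (x j) = c i j"
        using Fd[OF t01[OF that(1)] t01[OF that(2)]] unfolding cone_dist_def x_def c_def by simp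
      then show ?thesis using pdist_conv[OF U s xc[OF that(1)] xc[OF that(2)]] by simp
    qed
    have cpos: "c i j > 0" if "i < n" "j < n" "i \<noteq> j" for i j
      unfolding c_def using that t01 n by (intro cd_pos) (auto simp: t_def)
    have ev: "eventually (\<lambda>m. \<forall>p\<in>{..<n}\<times>{..<n}. fst p = snd p \<or>
        (c (fst p) (snd p) / K < dist (x (fst p) m) (x (snd p) m) / s m \<and>
         dist (x (fst p) m) (x (snd p) m) / s m < K * c (fst p) (snd p))) U"
    proof (rule eventually_ball_finite)
      show "finite ({..<n}\<times>{..<n})" by simp
      show "\<forall>p\<in>{..<n}\<times>{..<n}. eventually (\<lambda>m. fst p = snd p \<or>
        (c (fst p) (snd p) / K < dist (x (fst p) m) (x (snd p) m) / s m \<and>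
         dist (x (fst p) m) (x (snd p) m) / s m < K * c (fst p) (snd p))) U"
      proof
        fix p assume p: "p \<in> {..<n}\<times>{..<n}"
        obtain i j where ij: "p = (i, j)" "i < n" "j < n" using p by auto
        show "eventually (\<lambda>m. fst p = snd p \<or>
        (c (fst p) (snd p) / K < dist (x (fst p) m) (x (snd p) m) / s m \<and>
         dist (x (fst p) m) (x (snd p) m) / s m < K * c (fst p) (snd p))) U"
        proof (cases "i = j")
          case True then show ?thesis using ij by simp
        next
          case False
          have cp: "c i j > 0" using cpos[OF ij(2,3) False] .
          have "c i j / K < c i j" using cp K by (simp add: divide_less_eq)
          have "c i j < K * c i j" using cp K by simp
          have e1: "eventually (\<lambda>m. c i j / K < dist (x i m) (x j m) / s m) U"
            using order_tendstoD(1)[OF conv[OF ij(2,3)] \<open>c i j / K < c i j\<close>] .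
          have e2: "eventually (\<lambda>m. dist (x i m) (x j m) / s m < K * c i j) U"
            using order_tendstoD(2)[OF conv[OF ij(2,3)] \<open>c i j < K * c i j\<close>] .
          show ?thesis using eventually_conj[OF e1 e2] ij by (auto elim: eventually_mono)
        qed
      qed
    qed
    have slU: "filterlim s at_top U" by (rule filterlim_mono[OF sl order_refl np_props(3)[OF U]])
    have evs: "eventually (\<lambda>m. M * real n + 1 \<le> s m) U"
      using slU unfolding filterlim_at_top by blast
    obtain m where m: "\<forall>p\<in>{..<n}\<times>{..<n}. fst p = snd p \<or>
        (c (fst p) (snd p) / K < dist (x (fst p) m) (x (snd p) m) / s m \<and>
         dist (x (fst p) m) (x (snd p) m) / s m < K * c (fst p) (snd p))"
      and sm: "M * real n + 1 \<le> s m"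
      using eventually_happens'[OF np_props(1)[OF U] eventually_conj[OF ev evs]] by blast
    have smp: "s m > 0" using s by blast
    define lam where "lam = s m / real n"
    have lamM: "lam > M" unfolding lam_def using sm n by (simp add: less_divide_eq)
    have ngon: "ngon_dist lam n i j = s m * c i j" for i j
      unfolding ngon_dist_def lam_def c_def t_def using cd_scale[OF n, of "real i" "real j"] n by simp
    have h1: "\<forall>i<n. x i m \<in> X" using xc unfolding cone_seqs_def by blast
    have h2: "ngon_dist lam n i j / K \<le> dist (x i m) (x j m) \<and> dist (x i m) (x j m) \<le> K * ngon_dist lam n i j"
      if ij: "i < n" "j < n" for i j
      proof (cases "i = j")
        case True then show ?thesis by (simp add: ngon_dist_def circle_dist_def)
      next
        case False
        then have a: "c i j / K < dist (x i m) (x j m) / s m" "dist (x i m) (x j m) / s m < K * c i j"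
          using m ij by auto
        have "ngon_dist lam n i j / K = s m * (c i j / K)" by (simp add: ngon)
        also have "\<dots> \<le> s m * (dist (x i m) (x j m) / s m)" using a smp by (intro mult_left_mono) auto
        also have "\<dots> = dist (x i m) (x j m)" using smp by simp
        finally have 1: "ngon_dist lam n i j / K \<le> dist (x i m) (x j m)" .
        have "dist (x i m) (x j m) = s m * (dist (x i m) (x j m) / s m)" using smp by simp
        also have "\<dots> \<le> s m * (K * c i j)" using a smp by (intro mult_left_mono) auto
        also have "\<dots> = K * ngon_dist lam n i j" by (simp add: ngon)
        finally show ?thesis using 1 by simp
      qed
    have "bilip_ngon X K lam n (\<lambda>i. x i m)"
      unfolding bilip_ngon_def using h1 h2 by blast
    then show ?thesis using lamM by blast
  qed
qed


lemma approx_circle: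
  assumes A: "approximates_ngons X"
  shows "\<exists>U b s. nonprincipal_ultrafilter U \<and> (\<forall>m. b m \<in> X) \<and> (\<forall>m. s m > 0)
            \<and> filterlim s at_top sequentially \<and> cone_has_unit_circle X U b s"
proof -
  obtain U where U: "nonprincipal_ultrafilter U" using ultra_ex by blast
  define K where "K m = 1 + 1 / real (Suc m)" for m
  have K1: "K m > 1" for m by (simp add: K_def)
  have "\<forall>m. \<exists>lam g. lam > real (Suc m) \<and> bilip_ngon X (K m) lam (Suc m) g"
    using A K1 unfolding approximates_ngons_def by blast
  then obtain lam g where lg: "\<And>m. lam m > real (Suc m)" "\<And>m. bilip_ngon X (K m) (lam m) (Suc m) (g m)"
    by metis
  define s where "s m = lam m * real (Suc m)" for m
  define b where "b m = g m 0" for m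
  have lampos: "lam m > 0" for m using lg(1)[of m] by linarith
  have spos: "\<forall>m. s m > 0" using lampos by (simp add: s_def)
  have gX: "g m i \<in> X" if "i < Suc m" for m i using lg(2)[of m] that unfolding bilip_ngon_def by blast
  have gd: "ngon_dist (lam m) (Suc m) i j / K m \<le> dist (g m i) (g m j) \<and>
      dist (g m i) (g m j) \<le> K m * ngon_dist (lam m) (Suc m) i j" if "i < Suc m" "j < Suc m" for m i j
    using lg(2)[of m] that unfolding bilip_ngon_def by blast
  have bX: "\<forall>m. b m \<in> X" using gX by (simp add: b_def)
  have sl: "filterlim s at_top sequentially"
  proof (rule filterlim_at_top_mono[OF filterlim_real_sequentially])
    show "\<forall>\<^sub>F x in sequentially. real x \<le> s x"
    proof (rule always_eventually, rule allI)
      fix m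
      have "real m \<le> lam m" using lg(1)[of m] by simp
      also have "\<dots> \<le> lam m * real (Suc m)" using lampos[of m] by simp
      finally show "real m \<le> s m" by (simp add: s_def)
    qed
  qed
  define idx where "idx t m = nat \<lfloor>t * real (Suc m)\<rfloor>" for t :: real and m
  have idx_lt: "idx t m < Suc m" if "t \<in> {0..<1}" for t m
  proof -
    have "t * real (Suc m) < real (Suc m)" using that by simp
    then have "\<lfloor>t * real (Suc m)\<rfloor> < int (Suc m)" by (simp add: floor_less_iff)
    then show ?thesis unfolding idx_def by simp
  qed
  have idx_approx: "\<bar>real (idx t m) / real (Suc m) - t\<bar> \<le> 1 / real (Suc m)" if "t \<in> {0..<1}" for t m
  proof -
    have nn: "t * real (Suc m) \<ge> 0" using that by simp
    have r: "real (idx t m) = of_int \<lfloor>t * real (Suc m)\<rfloor>" unfolding idx_def using nn by simp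
    have "of_int \<lfloor>t * real (Suc m)\<rfloor> \<le> t * real (Suc m)" "t * real (Suc m) < of_int \<lfloor>t * real (Suc m)\<rfloor> + 1"
      by linarith+
    then have "\<bar>real (idx t m) - t * real (Suc m)\<bar> \<le> 1" using r by linarith
    then have "\<bar>real (idx t m) - t * real (Suc m)\<bar> / real (Suc m) \<le> 1 / real (Suc m)"
      by (intro divide_right_mono) auto
    moreover have "\<bar>real (idx t m) - t * real (Suc m)\<bar> / real (Suc m) = \<bar>real (idx t m) / real (Suc m) - t\<bar>"
      by (simp add: field_simps)
    ultimately show ?thesis by simp
  qed
  define xs where "xs t m = g m (idx t m)" for t m
  have ngon_eq: "ngon_dist (lam m) (Suc m) i j = s m * circle_dist 1 (real i / real (Suc m)) (real j / real (Suc m))" for m i j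
    unfolding ngon_dist_def s_def using cd_scale[of "real (Suc m)" "real i" "real j"] by (simp del: of_nat_Suc)
  have xs_cone: "xs t \<in> cone_seqs X b s" if t: "t \<in> {0..<1}" for t
    unfolding cone_seqs_def
  proof (intro CollectI conjI allI exI)
    fix m show "xs t m \<in> X" unfolding xs_def using gX idx_lt[OF t] by blast
  next
    fix m
    have "dist (xs t m) (b m) \<le> K m * ngon_dist (lam m) (Suc m) (idx t m) 0"
      using gd[OF idx_lt[OF t], of 0] unfolding xs_def b_def by simp
    also have "\<dots> \<le> 2 * (lam m * real (Suc m))"
    proof -
      have "circle_dist (real (Suc m)) (real (idx t m)) (real 0) \<le> real (Suc m)"
        using cd_le[of "real (Suc m)" "real (idx t m)" 0] idx_lt[OF t, of m] by simp
      then have "ngon_dist (lam m) (Suc m) (idx t m) 0 \<le> lam m * real (Suc m)"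
        unfolding ngon_dist_def using lampos[of m] by (intro mult_left_mono) auto
      moreover have "K m \<le> 2" "K m \<ge> 0" unfolding K_def by (auto simp: divide_le_eq)
      moreover have "lam m * real (Suc m) \<ge> 0" using lampos[of m] by simp
      moreover have "ngon_dist (lam m) (Suc m) (idx t m) 0 \<ge> 0"
        unfolding ngon_dist_def circle_dist_def using lampos[of m] idx_lt[OF t, of m] by simp
      ultimately show ?thesis by (intro mult_mono) auto
    qed
    finally show "dist (xs t m) (b m) / s m \<le> 2" using spos by (simp add: s_def divide_le_eq)
  qed
  have Klim: "K \<longlonglongrightarrow> 1"
  proof -
    have "(\<lambda>m. 1 / real (Suc m)) \<longlonglongrightarrow> 0" by (rule LIMSEQ_Suc[OF lim_const_over_n])
    then show ?thesis unfolding K_def using tendsto_add[OF tendsto_const, of _ 0 sequentially 1] by simp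
  qed
  have inv0: "(\<lambda>m. 2 / real (Suc m)) \<longlonglongrightarrow> 0" by (rule LIMSEQ_Suc[OF lim_const_over_n])
  have key: "((\<lambda>m. dist (xs t m) (xs t' m) / s m) \<longlongrightarrow> circle_dist 1 t t') sequentially"
    if t: "t \<in> {0..<1}" and t': "t' \<in> {0..<1}" for t t'
  proof -
    define cm where "cm m = circle_dist 1 (real (idx t m) / real (Suc m)) (real (idx t' m) / real (Suc m))" for m
    have cm_lim: "cm \<longlonglongrightarrow> circle_dist 1 t t'"
    proof -
      have "(\<lambda>m. cm m - circle_dist 1 t t') \<longlonglongrightarrow> 0"
      proof (rule Lim_null_comparison[OF _ inv0])
        show "\<forall>\<^sub>F m in sequentially. norm (cm m - circle_dist 1 t t') \<le> 2 / real (Suc m)"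
        proof (rule always_eventually, rule allI)
          fix m
          have "norm (cm m - circle_dist 1 t t') \<le> 1 / real (Suc m) + 1 / real (Suc m)"
            unfolding cm_def real_norm_def
            using cd_lip[of "real (idx t m) / real (Suc m)" "real (idx t' m) / real (Suc m)" t t']
              idx_approx[OF t, of m] idx_approx[OF t', of m] by linarith
          then show "norm (cm m - circle_dist 1 t t') \<le> 2 / real (Suc m)" by simp
        qed
      qed
      then show ?thesis by (simp add: LIM_zero_iff)
    qed
    have lo: "(\<lambda>m. cm m / K m) \<longlonglongrightarrow> circle_dist 1 t t'"
      using tendsto_divide[OF cm_lim Klim] by simp
    have hi: "(\<lambda>m. K m * cm m) \<longlonglongrightarrow> circle_dist 1 t t'"
      using tendsto_mult[OF Klim cm_lim] by simp
    have bnd: "cm m / K m \<le> dist (xs t m) (xs t' m) / s m \<and> dist (xs t m) (xs t' m) / s m \<le> K m * cm m" for m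
    proof -
      have sp: "s m > 0" using spos by blast
      have d: "s m * cm m / K m \<le> dist (xs t m) (xs t' m)" "dist (xs t m) (xs t' m) \<le> K m * (s m * cm m)"
        using gd[OF idx_lt[OF t] idx_lt[OF t'], of m] unfolding xs_def ngon_eq cm_def by auto
      have "cm m / K m = (s m * cm m / K m) / s m" using sp by simp
      also have "\<dots> \<le> dist (xs t m) (xs t' m) / s m" using d(1) sp by (intro divide_right_mono) auto
      finally have 1: "cm m / K m \<le> dist (xs t m) (xs t' m) / s m" .
      have "dist (xs t m) (xs t' m) / s m \<le> K m * (s m * cm m) / s m" using d(2) sp by (intro divide_right_mono) auto
      also have "\<dots> = K m * cm m" using sp by simp
      finally show ?thesis using 1 by simp
    qed
    show ?thesis
      by (rule tendsto_sandwich[OF _ _ lo hi]) (use bnd in auto)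
  qed
  define Fc where "Fc t = crel X U b s `` {xs t}" for t
  have "cone_has_unit_circle X U b s"
    unfolding cone_has_unit_circle_def
  proof (intro exI conjI ballI)
    fix t :: real assume t: "t \<in> {0..<1}"
    show "Fc t \<in> cone_points X U b s" unfolding Fc_def by (rule class_in(1)[OF U xs_cone[OF t]])
  next
    fix t t' :: real assume t: "t \<in> {0..<1}" and t': "t' \<in> {0..<1}"
    define y where "y = (SOME y. y \<in> crel X U b s `` {xs t})"
    define y' where "y' = (SOME y. y \<in> crel X U b s `` {xs t'})"
    have y: "y \<in> cone_seqs X b s" "cone_pdist U s (xs t) y = 0"
      using rep_class[OF U xs_cone[OF t]] unfolding y_def by auto
    have y': "y' \<in> cone_seqs X b s" "cone_pdist U s (xs t') y' = 0"
      using rep_class[OF U xs_cone[OF t']] unfolding y'_def by auto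
    have a1: "((\<lambda>m. dist (xs t m) (y m) / s m) \<longlongrightarrow> 0) U"
      using pdist_conv[OF U spos xs_cone[OF t] y(1)] y(2) by simp
    have a2: "((\<lambda>m. dist (xs t' m) (y' m) / s m) \<longlongrightarrow> 0) U"
      using pdist_conv[OF U spos xs_cone[OF t'] y'(1)] y'(2) by simp
    have kU: "((\<lambda>m. dist (xs t m) (xs t' m) / s m) \<longlongrightarrow> circle_dist 1 t t') U"
      by (rule tendsto_mono[OF np_props(3)[OF U] key[OF t t']])
    have dlim: "((\<lambda>m. dist (y m) (y' m) / s m - dist (xs t m) (xs t' m) / s m) \<longlongrightarrow> 0) U"
    proof (rule Lim_null_comparison[OF _ tendsto_add_zero[OF a1 a2]])
      show "\<forall>\<^sub>F m in U. norm (dist (y m) (y' m) / s m - dist (xs t m) (xs t' m) / s m)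
          \<le> dist (xs t m) (y m) / s m + dist (xs t' m) (y' m) / s m"
      proof (rule always_eventually, rule allI)
        fix m
        have sp: "s m > 0" using spos by blast
        have tr1: "dist (y m) (y' m) \<le> dist (xs t m) (y m) + dist (xs t m) (xs t' m) + dist (xs t' m) (y' m)"
          using dist_triangle[of "y m" "y' m" "xs t m"] dist_triangle[of "xs t m" "y' m" "xs t' m"]
            dist_commute[of "y m" "xs t m"] by linarith
        have tr2: "dist (xs t m) (xs t' m) \<le> dist (xs t m) (y m) + dist (y m) (y' m) + dist (xs t' m) (y' m)"
          using dist_triangle[of "xs t m" "xs t' m" "y m"] dist_triangle[of "y m" "xs t' m" "y' m"]
            dist_commute[of "y' m" "xs t' m"] by linarith
        have "\<bar>dist (y m) (y' m) - dist (xs t m) (xs t' m)\<bar> \<le> dist (xs t m) (y m) + dist (xs t' m) (y' m)"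
          using tr1 tr2 by linarith
        then have "\<bar>dist (y m) (y' m) - dist (xs t m) (xs t' m)\<bar> / s m \<le> (dist (xs t m) (y m) + dist (xs t' m) (y' m)) / s m"
          using sp by (intro divide_right_mono) auto
        then show "norm (dist (y m) (y' m) / s m - dist (xs t m) (xs t' m) / s m)
          \<le> dist (xs t m) (y m) / s m + dist (xs t' m) (y' m) / s m"
          using sp by (simp add: diff_divide_distrib[symmetric] add_divide_distrib[symmetric])
      qed
    qed
    then have "((\<lambda>m. dist (y m) (y' m) / s m) \<longlongrightarrow> circle_dist 1 t t') U"
      using tendsto_add[OF dlim kU] by simp
    then have "cone_pdist U s y y' = circle_dist 1 t t'"
      unfolding cone_pdist_def by (rule ulim_eq[OF U])
    then show "cone_dist U s (Fc t) (Fc t') = circle_dist 1 t t'"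
      unfolding cone_dist_def Fc_def y_def y'_def .
  qed
  then have "nonprincipal_ultrafilter U \<and> (\<forall>m. b m \<in> X) \<and> (\<forall>m. s m > 0)
            \<and> filterlim s at_top sequentially \<and> cone_has_unit_circle X U b s"
    using U bX spos sl by (intro conjI)
  then show ?thesis by blast
qed

theorem corollary3p8:
  fixes X :: "'a::metric_space set"
  shows "(\<forall>U b s. nonprincipal_ultrafilter U \<and> (\<forall>m. b m \<in> X) \<and> (\<forall>m. s m > 0)
            \<and> filterlim s at_top sequentially \<longrightarrow> \<not> cone_has_unit_circle X U b s)
         \<longleftrightarrow> \<not> approximates_ngons X"
proof
  assume H: "\<forall>U b s. nonprincipal_ultrafilter U \<and> (\<forall>m. b m \<in> X) \<and> (\<forall>m. s m > 0)
            \<and> filterlim s at_top sequentially \<longrightarrow> \<not> cone_has_unit_circle X U b s"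
  show "\<not> approximates_ngons X"
  proof
    assume "approximates_ngons X"
    then obtain U b s where "nonprincipal_ultrafilter U" "\<forall>m. b m \<in> X" "\<forall>m. s m > 0"
      "filterlim s at_top sequentially" "cone_has_unit_circle X U b s"
      using approx_circle by blast
    then show False using H by blast
  qed
next
  assume H: "\<not> approximates_ngons X"
  show "\<forall>U b s. nonprincipal_ultrafilter U \<and> (\<forall>m. b m \<in> X) \<and> (\<forall>m. s m > 0)
            \<and> filterlim s at_top sequentially \<longrightarrow> \<not> cone_has_unit_circle X U b s"
  proof (intro allI impI notI)
    fix U b s assume a: "nonprincipal_ultrafilter U \<and> (\<forall>m. b m \<in> X) \<and> (\<forall>m. (s::nat\<Rightarrow>real) m > 0)
            \<and> filterlim s at_top sequentially" and c: "cone_has_unit_circle X U b s"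
    have "approximates_ngons X" using circle_approx[OF _ _ _ c] a by blast
    then show False using H by blast
  qed
qed

end
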